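(* Let $\vartheta$ be a real number, $d$ a positive integer, $\tau_1,\tau_2$ positive real numbers, and $\sigma$ a non-decreasing positive function on the positive integers with $\lim_{n\to\infty}\sigma(n)=\infty$. Assume there is a sequence $(P_n)_{n\ge0}$ of polynomials in $\mathbb{Z}[X]$, with $P_n$ of degree at most $d$ and length at most $e^{\sigma(n)}$, such that $$e^{-(\tau_1+o(1))\sigma(n)}\le|P_n(\vartheta)|\le e^{-(\tau_2+o(1))\sigma(n+1)}.$$ Then $\tau_2\le d+d(\tau_1-\tau_2)$.
   Context: The length of a polynomial with integer coefficients is the sum of the absolute values of its coefficients. $o(1)$ denotes quantities tending to $0$ as $n\to\infty$. *)

theory Defs
  imports Complex_Main "HOL-Computational_Algebra.Polynomial"
begin

definition poly_length :: "int poly \<Rightarrow> int" where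
  "poly_length p = (\<Sum>i\<le>degree p. \<bar>coeff p i\<bar>)"

end

theory Submission
  imports Defs
begin

lemma poly_sum_le:
  fixes p :: "int poly"
  assumes "degree p \<le> d"
  shows "poly (map_poly real_of_int p) x = (\<Sum>i\<le>d. real_of_int (coeff p i) * x^i)"
proof -
  have dg: "degree (map_poly real_of_int p) = degree p"
    by (rule degree_map_poly) simp
  have "poly (map_poly real_of_int p) x
      = (\<Sum>i\<le>degree (map_poly real_of_int p). coeff (map_poly real_of_int p) i * x^i)"
    by (rule poly_altdef)
  also have "\<dots> = (\<Sum>i\<le>d. coeff (map_poly real_of_int p) i * x^i)"
    by (rule sum.mono_neutral_left) (use assms dg in \<open>auto simp: coeff_eq_0\<close>)
  also have "\<dots> = (\<Sum>i\<le>d. real_of_int (coeff p i) * x^i)"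
    by (simp add: coeff_map_poly)
  finally show ?thesis .
qed

lemma length_le:
  fixes p :: "int poly"
  assumes "degree p \<le> d"
  shows "poly_length p = (\<Sum>i\<le>d. \<bar>coeff p i\<bar>)"
  unfolding poly_length_def
  by (rule sum.mono_neutral_left) (use assms in \<open>auto simp: coeff_eq_0\<close>)

lemma core:
  fixes q \<delta> \<theta> a b s s1 :: real and c y :: "nat \<Rightarrow> int" and d :: nat
  assumes q1: "q \<ge> 1" and dpos: "\<delta> \<ge> 0"
    and app: "\<forall>k\<le>d. \<bar>q*\<theta>^k - real_of_int (y k)\<bar> \<le> \<delta>"
    and len: "(\<Sum>k\<le>d. real_of_int \<bar>c k\<bar>) \<le> exp s"
    and lo: "exp (-a*s) \<le> \<bar>\<Sum>k\<le>d. real_of_int (c k) * \<theta>^k\<bar>"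
    and up: "\<bar>\<Sum>k\<le>d. real_of_int (c k) * \<theta>^k\<bar> \<le> exp (-b*s1)"
    and big: "3*q \<le> exp (b*s1)"
  shows "(2/3) * exp (-s) \<le> \<delta> \<or> q * exp(-(1+a)*s) \<le> \<delta>"
proof -
  define N where "N = (\<Sum>k\<le>d. c k * y k)"
  define E where "E = (\<Sum>k\<le>d. real_of_int (c k) * (q*\<theta>^k - y k))"
  define v where "v = (\<Sum>k\<le>d. real_of_int (c k) * \<theta>^k)"
  have NE: "real_of_int N = q*v - E"
    unfolding N_def E_def v_def
    by (simp add: sum_distrib_left algebra_simps sum_subtractf)
  have Eb: "\<bar>E\<bar> \<le> exp s * \<delta>"
  proof -
    have "\<bar>E\<bar> \<le> (\<Sum>k\<le>d. \<bar>real_of_int (c k) * (q*\<theta>^k - y k)\<bar>)"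
      unfolding E_def by (rule sum_abs)
    also have "\<dots> \<le> (\<Sum>k\<le>d. real_of_int \<bar>c k\<bar> * \<delta>)"
      by (rule sum_mono) (use app in \<open>auto simp: abs_mult intro!: mult_left_mono\<close>)
    also have "\<dots> = (\<Sum>k\<le>d. real_of_int \<bar>c k\<bar>) * \<delta>"
      by (simp add: sum_distrib_right)
    also have "\<dots> \<le> exp s * \<delta>" using len dpos by (rule mult_right_mono)
    finally show ?thesis .
  qed
  show ?thesis
  proof (cases "N = 0")
    case True
    then have "q*v = E" using NE by simp
    then have "q*\<bar>v\<bar> \<le> exp s * \<delta>" using Eb q1 by (simp add: abs_mult)
    moreover have "q*exp(-a*s) \<le> q*\<bar>v\<bar>" using lo q1 v_def by simp
    ultimately have "q*exp(-a*s) \<le> exp s * \<delta>" by linarith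
    then have "q*exp(-a*s)*exp(-s) \<le> exp s * \<delta> * exp (-s)" by simp
    also have "\<dots> = \<delta>" by (simp add: exp_minus field_simps)
    finally have "q*(exp(-a*s)*exp(-s)) \<le> \<delta>" by (simp add: mult.assoc)
    moreover have "exp(-a*s)*exp(-s) = exp(-(1+a)*s)"
      by (simp add: exp_add[symmetric] algebra_simps)
    ultimately show ?thesis by simp
  next
    case False
    then have "1 \<le> \<bar>real_of_int N\<bar>" by linarith
    also have "\<dots> \<le> q*\<bar>v\<bar> + \<bar>E\<bar>" using NE q1 abs_triangle_ineq4[of "q*v" E] by (simp add: abs_mult)
    also have "\<dots> \<le> q*exp(-b*s1) + exp s * \<delta>"
    proof -
      have "q*\<bar>v\<bar> \<le> q*exp(-b*s1)" using up q1 unfolding v_def by (intro mult_left_mono) auto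
      then show ?thesis using Eb by linarith
    qed
    finally have h: "1 \<le> q*exp(-b*s1) + exp s * \<delta>" .
    have "q*exp(-b*s1) = q / exp(b*s1)" by (simp add: exp_minus field_simps)
    also have "\<dots> \<le> 1/3" using big q1 by (simp add: field_simps)
    finally have "2/3 \<le> exp s * \<delta>" using h by linarith
    then have "(2/3)*exp(-s) \<le> exp s * \<delta> * exp(-s)" by simp
    also have "\<dots> = \<delta>" by (simp add: exp_minus field_simps)
    finally show ?thesis by simp
  qed
qed

lemma floor_close:
  fixes u w :: real and Q :: nat
  assumes "Q \<ge> 1" "0 \<le> u" "u < 1" "0 \<le> w" "w < 1"
    and "\<lfloor>Q*u\<rfloor> = \<lfloor>Q*w\<rfloor>"
  shows "\<bar>u - w\<bar> \<le> 1/Q"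
proof -
  have "Q*u - Q*w < 1" "Q*w - Q*u < 1"
    using floor_correct[of "Q*u"] floor_correct[of "Q*w"] assms(6) by linarith+
  then have "\<bar>Q*u - Q*w\<bar> < 1" by linarith
  moreover have "\<bar>Q*u - Q*w\<bar> = real Q * \<bar>u - w\<bar>"
    by (simp add: right_diff_distrib[symmetric] abs_mult)
  ultimately have "real Q * \<bar>u - w\<bar> < 1" by simp
  then show ?thesis using assms(1) by (simp add: field_simps)
qed

lemma dirichlet:
  fixes \<theta> :: real and d Q :: nat
  assumes Q1: "Q \<ge> 1"
  shows "\<exists>q::nat. 1 \<le> q \<and> q \<le> Q^d \<and>
           (\<exists>p::nat\<Rightarrow>int. \<forall>k\<in>{1..d}. \<bar>real q * \<theta>^k - real_of_int (p k)\<bar> \<le> 1/Q)"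
proof -
  define f where "f i = map (\<lambda>k. nat \<lfloor>real Q * frac (real i * \<theta>^k)\<rfloor>) [1..<d+1]" for i :: nat
  have bnd: "nat \<lfloor>real Q * frac x\<rfloor> < Q" for x
  proof -
    have "real Q * frac x < real Q"
      using Q1 frac_lt_1 by simp
    moreover have "0 \<le> real Q * frac x" using frac_ge_0 by simp
    ultimately have "\<lfloor>real Q * frac x\<rfloor> < int Q" "0 \<le> \<lfloor>real Q * frac x\<rfloor>"
      by (simp_all add: floor_less_iff)
    then show ?thesis by (simp add: nat_less_iff)
  qed
  have sub: "f ` {0..Q^d} \<subseteq> {xs. set xs \<subseteq> {..<Q} \<and> length xs = d}"
    using bnd by (auto simp: f_def)
  have card: "card {xs. set xs \<subseteq> {..<Q} \<and> length xs = d} = Q^d"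
    by (simp add: card_lists_length_eq)
  have "\<not> inj_on f {0..Q^d}"
  proof
    assume "inj_on f {0..Q^d}"
    then have "card {0..Q^d} \<le> card {xs. set xs \<subseteq> {..<Q} \<and> length xs = (d::nat)}"
      using sub by (intro card_inj_on_le) (auto simp: finite_lists_length_eq)
    then show False using card by simp
  qed
  then obtain i j where ij: "i \<in> {0..Q^d}" "j \<in> {0..Q^d}" "i \<noteq> j" "f i = f j"
    unfolding inj_on_def by blast
  obtain i j where ij2: "i < j" "j \<le> Q^d" "f i = f j"
  proof (cases "i < j")
    case True then show ?thesis using that ij by auto
  next
    case False then show ?thesis using that[of j i] ij by auto
  qed
  define p where "p k = \<lfloor>real j * \<theta>^k\<rfloor> - \<lfloor>real i * \<theta>^k\<rfloor>" for k
  have "\<forall>k\<in>{1..d}. \<bar>real (j - i) * \<theta>^k - real_of_int (p k)\<bar> \<le> 1/Q"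
  proof
    fix k assume k: "k \<in> {1..d}"
    have "nat \<lfloor>real Q * frac (real i * \<theta>^k)\<rfloor> = nat \<lfloor>real Q * frac (real j * \<theta>^k)\<rfloor>"
    proof -
      have "\<forall>x\<in>set [1..<d+1]. nat \<lfloor>real Q * frac (real i * \<theta>^x)\<rfloor> = nat \<lfloor>real Q * frac (real j * \<theta>^x)\<rfloor>"
        using ij2(3) unfolding f_def map_eq_conv .
      moreover have "k \<in> set [1..<d+1]" using k by (simp del: upt_Suc)
      ultimately show ?thesis by blast
    qed
    moreover have "0 \<le> \<lfloor>real Q * frac (real i * \<theta>^k)\<rfloor>" "0 \<le> \<lfloor>real Q * frac (real j * \<theta>^k)\<rfloor>"
      using frac_ge_0 by auto
    ultimately have fl: "\<lfloor>real Q * frac (real i * \<theta>^k)\<rfloor> = \<lfloor>real Q * frac (real j * \<theta>^k)\<rfloor>"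
      using eq_nat_nat_iff by metis
    have "\<bar>frac (real i * \<theta>^k) - frac (real j * \<theta>^k)\<bar> \<le> 1/Q"
      by (rule floor_close[OF Q1 frac_ge_0 frac_lt_1 frac_ge_0 frac_lt_1 fl])
    moreover have "real (j - i) * \<theta>^k - real_of_int (p k)
        = frac (real j * \<theta>^k) - frac (real i * \<theta>^k)"
      using ij2(1) by (simp add: p_def frac_def of_nat_diff algebra_simps)
    ultimately show "\<bar>real (j - i) * \<theta>^k - real_of_int (p k)\<bar> \<le> 1/Q" by linarith
  qed
  moreover have "1 \<le> j - i" "j - i \<le> Q^d" using ij2 by auto
  ultimately show ?thesis by blast
qed

theorem mainTheorem10:
  fixes \<theta> \<tau>1 \<tau>2 :: real and d :: nat
    and \<sigma> :: "nat \<Rightarrow> real" and P :: "nat \<Rightarrow> int poly"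
    and \<epsilon>1 \<epsilon>2 :: "nat \<Rightarrow> real"
  assumes "d > 0" and "\<tau>1 > 0" and "\<tau>2 > 0"
    and "\<And>n. n \<ge> 1 \<Longrightarrow> \<sigma> n > 0"
    and "\<And>m n. 1 \<le> m \<Longrightarrow> m \<le> n \<Longrightarrow> \<sigma> m \<le> \<sigma> n"
    and "filterlim \<sigma> at_top sequentially"
    and "\<And>n. degree (P n) \<le> d"
    and "\<And>n. n \<ge> 1 \<Longrightarrow> real_of_int (poly_length (P n)) \<le> exp (\<sigma> n)"
    and "\<epsilon>1 \<longlonglongrightarrow> 0" and "\<epsilon>2 \<longlonglongrightarrow> 0"
    and "\<And>n. n \<ge> 1 \<Longrightarrow>
           exp (- (\<tau>1 + \<epsilon>1 n) * \<sigma> n) \<le> \<bar>poly (map_poly real_of_int (P n)) \<theta>\<bar>"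
    and "\<And>n. n \<ge> 1 \<Longrightarrow>
           \<bar>poly (map_poly real_of_int (P n)) \<theta>\<bar> \<le> exp (- (\<tau>2 + \<epsilon>2 n) * \<sigma> (n + 1))"
  shows "\<tau>2 \<le> real d + real d * (\<tau>1 - \<tau>2)"
proof -
  note dpos = assms(1) and t1 = assms(2) and t2 = assms(3) and spos = assms(4)
    and smono = assms(5) and slim = assms(6) and deg = assms(7) and len = assms(8)
    and e1 = assms(9) and e2 = assms(10) and lob = assms(11) and upb = assms(12)
  define v where "v n = poly (map_poly real_of_int (P n)) \<theta>" for n
  have t21: "\<tau>2 \<le> \<tau>1"
  proof (rule ccontr)
    assume "\<not> \<tau>2 \<le> \<tau>1"
    define g where "g = \<tau>2 - \<tau>1"
    have g: "g > 0" using \<open>\<not> \<tau>2 \<le> \<tau>1\<close> g_def by simp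
    have "eventually (\<lambda>n. \<epsilon>1 n < g/2) sequentially"
      using e1 g by (intro order_tendstoD) auto
    moreover have "eventually (\<lambda>n. -g/2 < \<epsilon>2 n) sequentially"
      using e2 g by (intro order_tendstoD) auto
    moreover have "eventually (\<lambda>n. -\<tau>2 < \<epsilon>2 n) sequentially"
      using e2 t2 by (intro order_tendstoD) auto
    moreover have "eventually (\<lambda>n. 1 \<le> n) sequentially" by (rule eventually_ge_at_top)
    ultimately have "eventually (\<lambda>n. \<epsilon>1 n < g/2 \<and> -g/2 < \<epsilon>2 n \<and> -\<tau>2 < \<epsilon>2 n \<and> 1 \<le> n) sequentially"
      by eventually_elim auto
    then obtain n where n: "\<epsilon>1 n < g/2" "-g/2 < \<epsilon>2 n" "-\<tau>2 < \<epsilon>2 n" "1 \<le> n"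
      unfolding eventually_sequentially by auto
    have "exp (- (\<tau>1 + \<epsilon>1 n) * \<sigma> n) \<le> exp (- (\<tau>2 + \<epsilon>2 n) * \<sigma> (n + 1))"
      using lob[OF n(4)] upb[OF n(4)] by linarith
    also have "\<dots> \<le> exp (- (\<tau>2 + \<epsilon>2 n) * \<sigma> n)"
      using smono[of n "n+1"] n by (simp add: mult_left_mono)
    finally have "- (\<tau>1 + \<epsilon>1 n) * \<sigma> n \<le> - (\<tau>2 + \<epsilon>2 n) * \<sigma> n" by simp
    then have "(\<tau>2 + \<epsilon>2 n) * \<sigma> n \<le> (\<tau>1 + \<epsilon>1 n) * \<sigma> n" by (simp add: algebra_simps)
    then have "\<tau>2 + \<epsilon>2 n \<le> \<tau>1 + \<epsilon>1 n" using spos[OF n(4)] by simp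
    then show False using n g_def by simp
  qed
  have key: "\<tau>2 - \<eta> \<le> real d * (1 + \<tau>1 - \<tau>2 + 2*\<eta>)" if eta: "0 < \<eta>" "\<eta> < \<tau>2" for \<eta>
  proof -
    define a where "a = \<tau>1 + \<eta>"
    define b where "b = \<tau>2 - \<eta>"
    define \<kappa> where "\<kappa> = (1+a)/b"
    have b0: "b > 0" using eta b_def by simp
    have ab: "b \<le> a" using t21 eta a_def b_def by simp
    have ka: "1 - \<kappa> \<le> -1/b" using ab b0 unfolding \<kappa>_def by (simp add: field_simps)
    have k1: "1 - \<kappa> \<le> 0" proof -
      have "-1/b < 0" using b0 by simp
      then show ?thesis using ka by linarith
    qed
    have "eventually (\<lambda>n. \<epsilon>1 n < \<eta>) sequentially"
      using e1 eta by (intro order_tendstoD) auto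
    moreover have "eventually (\<lambda>n. -\<eta> < \<epsilon>2 n) sequentially"
      using e2 eta by (intro order_tendstoD) auto
    ultimately have "eventually (\<lambda>n. \<epsilon>1 n < \<eta> \<and> -\<eta> < \<epsilon>2 n) sequentially"
      by eventually_elim auto
    then obtain M where M: "\<And>n. n \<ge> M \<Longrightarrow> \<epsilon>1 n < \<eta> \<and> -\<eta> < \<epsilon>2 n"
      unfolding eventually_sequentially by auto
    define M0 where "M0 = max M 1"
    have M01: "M0 \<ge> 1" unfolding M0_def by simp
    have lo: "exp (-a * \<sigma> m) \<le> \<bar>v m\<bar>" if "m \<ge> M0" for m
    proof -
      have m1: "m \<ge> 1" using that M01 by simp
      have "-a * \<sigma> m \<le> - (\<tau>1 + \<epsilon>1 m) * \<sigma> m"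
        using M[of m] that spos[OF m1] unfolding a_def M0_def
        by (intro mult_right_mono) auto
      then have "exp (-a * \<sigma> m) \<le> exp (- (\<tau>1 + \<epsilon>1 m) * \<sigma> m)" by simp
      then show ?thesis using lob[OF m1] unfolding v_def by linarith
    qed
    have up: "\<bar>v m\<bar> \<le> exp (-b * \<sigma> (m+1))" if "m \<ge> M0" for m
    proof -
      have m1: "m \<ge> 1" using that M01 by simp
      have "- (\<tau>2 + \<epsilon>2 m) * \<sigma> (m+1) \<le> -b * \<sigma> (m+1)"
        using M[of m] that spos[of "m+1"] unfolding b_def M0_def
        by (intro mult_right_mono) auto
      then have "exp (- (\<tau>2 + \<epsilon>2 m) * \<sigma> (m+1)) \<le> exp (-b * \<sigma> (m+1))" by simp
      then show ?thesis using upb[OF m1] unfolding v_def by linarith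
    qed
    define Q0 where "Q0 = exp (b * \<sigma> M0)"
    have Q0pos: "Q0 > 0" unfolding Q0_def by simp
    define C where "C = min ((2/3) * 3 powr (-1/b)) (3 powr (-\<kappa>))"
    have Cpos: "C > 0" unfolding C_def by simp
    have lowb: "C * q powr (1-\<kappa>) \<le> \<delta>"
      if q: "q \<ge> Q0" "q \<ge> 1" and dl: "\<delta> \<ge> 0"
        and ap: "\<forall>k\<le>d. \<bar>q*\<theta>^k - real_of_int (y k)\<bar> \<le> \<delta>" for q \<delta> and y :: "nat \<Rightarrow> int"
    proof -
      define X where "X = ln (3*q)"
      have "eventually (\<lambda>n. X/b + 1 \<le> \<sigma> n) sequentially"
        using slim unfolding filterlim_at_top by auto
      then obtain N where N: "\<And>n. n \<ge> N \<Longrightarrow> X/b + 1 \<le> \<sigma> n"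
        unfolding eventually_sequentially by auto
      define Pm where "Pm m \<longleftrightarrow> M0 \<le> m \<and> X \<le> b * \<sigma> (m+1)" for m
      have exm: "Pm (max M0 N)"
      proof -
        have "X/b + 1 \<le> \<sigma> (max M0 N + 1)" using N by simp
        then have "X/b \<le> \<sigma> (max M0 N + 1)" by simp
        then have "X \<le> b * \<sigma> (max M0 N + 1)" using b0 by (simp add: field_simps)
        then show ?thesis unfolding Pm_def by simp
      qed
      define m where "m = (LEAST m. Pm m)"
      have Pmm: "Pm m" unfolding m_def by (rule LeastI[of Pm, OF exm])
      have mM0: "m \<ge> M0" and bigm: "X \<le> b * \<sigma> (m+1)" using Pmm unfolding Pm_def by auto
      have m1: "m \<ge> 1" using mM0 M01 by simp
      have sm: "b * \<sigma> m \<le> X"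
      proof (cases "m = M0")
        case True
        have "b * \<sigma> M0 = ln Q0" unfolding Q0_def by simp
        also have "\<dots> \<le> ln (3*q)" using q Q0pos by simp
        finally show ?thesis using True X_def by simp
      next
        case False
        then have "m - 1 \<ge> M0" using mM0 by simp
        moreover have "\<not> Pm (m-1)" using not_less_Least[of "m-1" Pm] m_def m1 by simp
        ultimately have "\<not> X \<le> b * \<sigma> (m - 1 + 1)" unfolding Pm_def by simp
        then show ?thesis using m1 by simp
      qed
      have big: "3*q \<le> exp (b * \<sigma> (m+1))"
      proof -
        have "3*q = exp X" unfolding X_def using q by simp
        then show ?thesis using bigm by simp
      qed
      have sumv: "v m = (\<Sum>k\<le>d. real_of_int (coeff (P m) k) * \<theta>^k)"
        unfolding v_def by (rule poly_sum_le[OF deg])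
      have lenm: "(\<Sum>k\<le>d. real_of_int \<bar>coeff (P m) k\<bar>) \<le> exp (\<sigma> m)"
        using len[OF m1] length_le[OF deg[of m]] by simp
      have disj: "(2/3) * exp (- \<sigma> m) \<le> \<delta> \<or> q * exp(-(1+a)* \<sigma> m) \<le> \<delta>"
        by (rule core[OF q(2) dl ap lenm]) (use lo[OF mM0] up[OF mM0] sumv big in auto)
      have smx: "\<sigma> m \<le> X/b" using sm b0 by (simp add: field_simps)
      have q3: "3*q > 0" using q by simp
      show ?thesis
      proof (cases "(2/3) * exp (- \<sigma> m) \<le> \<delta>")
        case True
        have "C * q powr (1-\<kappa>) \<le> (2/3) * 3 powr (-1/b) * q powr (-1/b)"
        proof (rule mult_mono)
          show "C \<le> (2/3) * 3 powr (-1/b)" unfolding C_def by simp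
          show "q powr (1-\<kappa>) \<le> q powr (-1/b)" using ka q by (intro powr_mono) auto
        qed (use Cpos in auto)
        also have "\<dots> = (2/3) * (3*q) powr (-1/b)" by (simp add: powr_mult)
        also have "(3*q) powr (-1/b) = exp (-X/b)"
          unfolding X_def using q3 by (simp add: powr_def)
        also have "(2/3) * exp (-X/b) \<le> (2/3) * exp (- \<sigma> m)" using smx by simp
        finally show ?thesis using True by linarith
      next
        case False
        then have h: "q * exp(-(1+a)* \<sigma> m) \<le> \<delta>" using disj by simp
        have "C * q powr (1-\<kappa>) \<le> 3 powr (-\<kappa>) * q powr (1-\<kappa>)"
          unfolding C_def by (intro mult_right_mono) auto
        also have "3 powr (-\<kappa>) * q powr (1-\<kappa>) = 3 powr (-\<kappa>) * (q * q powr (-\<kappa>))"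
          using q by (simp add: powr_diff powr_minus field_simps)
        also have "3 powr (-\<kappa>) * (q * q powr (-\<kappa>)) = q * (3*q) powr (-\<kappa>)"
          by (simp add: powr_mult)
        also have "(3*q) powr (-\<kappa>) = exp (-(1+a) * (X/b))"
          unfolding X_def \<kappa>_def using q3 b0 by (simp add: powr_def, simp add: field_simps)
        also have "q * exp (-(1+a) * (X/b)) \<le> q * exp (-(1+a) * \<sigma> m)"
        proof -
          have "(1+a)*\<sigma> m \<le> (1+a)*(X/b)"
            using smx t1 eta a_def by (intro mult_left_mono) auto
          then have "-(1+a)*(X/b) \<le> -(1+a)*\<sigma> m" by linarith
          then show ?thesis using q by (intro mult_left_mono) auto
        qed
        finally show ?thesis using h by linarith
      qed
    qed
    define Q0n where "Q0n = nat \<lceil>Q0\<rceil> + 1"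
    have Q0n: "real Q0n \<ge> Q0" "Q0n \<ge> 1" unfolding Q0n_def by linarith+
    define C' where "C' = C * real Q0n powr (1-\<kappa>) / real Q0n"
    have C'pos: "C' > 0" unfolding C'_def using Cpos Q0n by simp
    have lowall: "C' * real qn powr (1-\<kappa>) \<le> \<delta>"
      if qn: "qn \<ge> 1" and ap: "\<forall>k\<in>{1..d}. \<bar>real qn * \<theta>^k - real_of_int (p k)\<bar> \<le> \<delta>"
      for qn :: nat and p :: "nat \<Rightarrow> int" and \<delta>
    proof -
      have "1 \<in> {1..d}" using dpos by simp
      then have "\<bar>real qn * \<theta>^1 - real_of_int (p 1)\<bar> \<le> \<delta>" using ap by blast
      then have dl: "\<delta> \<ge> 0" by linarith
      define y where "y k = (if k = 0 then int (Q0n*qn) else int Q0n * p k)" for k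
      have ap': "\<forall>k\<le>d. \<bar>real (Q0n*qn)*\<theta>^k - real_of_int (y k)\<bar> \<le> real Q0n * \<delta>"
      proof (intro allI impI)
        fix k assume k: "k \<le> d"
        show "\<bar>real (Q0n*qn)*\<theta>^k - real_of_int (y k)\<bar> \<le> real Q0n * \<delta>"
        proof (cases "k = 0")
          case True then show ?thesis using dl by (simp add: y_def)
        next
          case False
          then have "k \<in> {1..d}" using k by simp
          then have "\<bar>real qn * \<theta>^k - real_of_int (p k)\<bar> \<le> \<delta>" using ap by blast
          moreover have "real (Q0n*qn)*\<theta>^k - real_of_int (y k) = real Q0n * (real qn * \<theta>^k - real_of_int (p k))"
            using False by (simp add: y_def algebra_simps)
          ultimately show ?thesis by (simp add: abs_mult mult_left_mono)
        qed
      qed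
      have "C * real (Q0n*qn) powr (1-\<kappa>) \<le> real Q0n * \<delta>"
      proof (rule lowb[OF _ _ _ ap'])
        show "Q0 \<le> real (Q0n*qn)" using Q0n qn
          by (metis mult.right_neutral mult_le_mono2 of_nat_le_iff order_trans)
        have "(1::nat) \<le> Q0n*qn" using Q0n(2) qn by (metis mult_le_mono nat_mult_1)
        then show "1 \<le> real (Q0n*qn)" by (metis of_nat_1 of_nat_le_iff)
        show "0 \<le> real Q0n * \<delta>" using dl by simp
      qed
      then have "C * real Q0n powr (1-\<kappa>) * real qn powr (1-\<kappa>) \<le> real Q0n * \<delta>"
        by (simp add: powr_mult mult.assoc)
      then show ?thesis unfolding C'_def using Q0n by (simp add: field_simps)
    qed
    define e where "e = real d * (\<kappa> - 1) - 1"
    have bound: "C' \<le> real Q powr e" if Q: "Q \<ge> 1" for Q :: nat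
    proof -
      obtain qn p where qn: "1 \<le> qn" "qn \<le> Q^d"
        and ap: "\<forall>k\<in>{1..d}. \<bar>real qn * \<theta>^k - real_of_int (p k)\<bar> \<le> 1/Q"
        using dirichlet[OF Q, of d \<theta>] by blast
      have "C' * real qn powr (1-\<kappa>) \<le> 1/Q" by (rule lowall[OF qn(1) ap])
      moreover have "real (Q^d) powr (1-\<kappa>) \<le> real qn powr (1-\<kappa>)"
        using qn k1 by (intro powr_mono2') auto
      moreover have "real (Q^d) powr (1-\<kappa>) = real Q powr (real d * (1-\<kappa>))"
        using Q by (simp add: powr_realpow[symmetric] powr_powr)
      ultimately have "C' * real Q powr (real d * (1-\<kappa>)) \<le> 1/Q"
        using C'pos by (smt (verit) mult_left_mono)
      then have h1: "C' * real Q powr (real d * (1-\<kappa>)) \<le> 1/Q" .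
      define A where "A = real Q powr (real d * (1-\<kappa>))"
      have A0: "A > 0" unfolding A_def using Q by simp
      have Q0': "real Q > 0" using Q by simp
      have "A * real Q powr e = 1/Q"
        using Q unfolding e_def A_def by (simp add: powr_add[symmetric] powr_minus_divide algebra_simps)
      then have eq: "real Q powr e = 1/(real Q * A)" using A0 Q0' by (simp add: field_simps)
      have "C' * A * real Q \<le> 1" using h1 Q0' unfolding A_def by (simp add: field_simps)
      then show ?thesis unfolding eq using A0 Q0' by (simp add: field_simps)
    qed
    have e0: "e \<ge> 0"
    proof (rule ccontr)
      assume "\<not> e \<ge> 0"
      then have "e < 0" by simp
      then have "((\<lambda>Q::nat. real Q powr e) \<longlongrightarrow> 0) sequentially"
        by (intro tendsto_neg_powr filterlim_real_sequentially)
      then have "eventually (\<lambda>Q::nat. real Q powr e < C') sequentially"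
        using C'pos by (intro order_tendstoD) auto
      moreover have "eventually (\<lambda>Q::nat. Q \<ge> 1) sequentially" by (rule eventually_ge_at_top)
      ultimately have "eventually (\<lambda>Q::nat. False) sequentially"
        by eventually_elim (use bound in force)
      then show False by simp
    qed
    then have "real d * ((1+a)/b - 1) \<ge> 1" unfolding e_def \<kappa>_def by simp
    then have "real d * ((1+a-b)/b) \<ge> 1" using b0 by (simp add: field_simps)
    then have "real d * (1+a-b) \<ge> b" using b0 by (simp add: field_simps)
    then show ?thesis unfolding a_def b_def by (simp add: algebra_simps)
  qed
  show ?thesis
  proof (rule ccontr)
    assume neg: "\<not> ?thesis"
    define g where "g = \<tau>2 - real d * (1 + \<tau>1 - \<tau>2)"
    have g: "g > 0" using neg unfolding g_def by (simp add: algebra_simps)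
    define \<eta> where "\<eta> = min (\<tau>2/2) (g / (2*real d + 2))"
    have eta: "0 < \<eta>" "\<eta> < \<tau>2" unfolding \<eta>_def using g t2 dpos by auto
    have "\<eta> * (2*real d + 1) < g"
    proof -
      have "\<eta> \<le> g / (2*real d + 2)" unfolding \<eta>_def by simp
      then have "\<eta> * (2*real d + 2) \<le> g" by (simp add: field_simps)
      then show ?thesis using eta by (simp add: algebra_simps)
    qed
    moreover have "\<tau>2 - \<eta> \<le> real d * (1 + \<tau>1 - \<tau>2 + 2*\<eta>)" by (rule key[OF eta])
    ultimately show False unfolding g_def by (simp add: algebra_simps)
  qed
qed

end
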